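(* The class $G_{UDG}$ is a strict subclass of the class $G_{LGG}$: every ordered bipartite graph in $G_{UDG}$ belongs to $G_{LGG}$, and there is an ordered bipartite graph in $G_{LGG}$ that is not (up to order-preserving isomorphism) in $G_{UDG}$.
   Context: An ordered bipartite graph is $G=(U,V,E)$ where $U,V$ are disjoint finite sets, each carrying a strict total order, and $E\subseteq U\times V$. A unit distance graph (UDG) on a planar point set $P$ joins two points iff their Euclidean distance is exactly $1$. A locally Gabriel graph (LGG) on $P$ is a geometric graph such that for every edge $(u,v)$ the disk with diameter $\overline{uv}$ contains no neighbour of $u$ or $v$ (other than $u,v$). Construction. Let $G$ be a UDG or LGG on a point set $P$ in convex position, and let $p_1,p_2\in P$ be antipodal (there are parallel lines through $p_1$ and $p_2$ with all of $P$ between them). Draw the line $p_1p_2$ horizontally; let $U=\{u_1,\dots,u_n\}$ be the points of $P$ strictly above it and $V=\{v_1,\dots,v_m\}$ those strictly below, each labelled from right to left. Let $E'$ be the set of edges of $G$ with one endpoint in $U$ and the other in $V$. For an edge $(u,v)\in E'$ with $v\in V$, let $v^{r}$ and $v^{\ell}$ be the points immediately to the right and left of $v$ along the lower boundary of the convex hull (in $V\cup\{p_1,p_2\}$); at least one of $\angle uvv^{r}$, $\angle uvv^{\ell}$ is acute. Put $(u,v)$ in $E_1$ if $\angle uvv^{r}$ is acute, otherwise in $E_2$ (either choice if both are acute). $G_1=(U,V,E_1)$ is ordered by $u_1<\dots<u_n$, $v_1<\dots<v_m$; $G_2=(U,V,E_2)$ carries the reversed orders. $G'_1$ (resp. $G'_2$)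 is obtained from $G_1$ (resp. $G_2$) by deleting, for every $v\in V$, the edge joining $v$ to its neighbour of highest order in $U$ in that graph's ordering. $G_{UDG}$ (resp. $G_{LGG}$) is the class of all ordered bipartite graphs $G'_1,G'_2$ obtained in this way from UDGs (resp. LGGs) on convex point sets. *)

theory Defs
  imports "HOL-Analysis.Analysis"
begin

type_synonym point = "real \<times> real"

text \<open>Ordered bipartite graphs: two vertex sides, each with a strict (total) order,
  and an edge set of pairs (left vertex, right vertex).\<close>
record 'a obgraph =
  lside :: "'a set"
  rside :: "'a set"
  edges :: "('a \<times> 'a) set"
  lord  :: "('a \<times> 'a) set"
  rord  :: "('a \<times> 'a) set"

definition obg_iso :: "'a obgraph \<Rightarrow> 'b obgraph \<Rightarrow> bool" where
  "obg_iso G H \<longleftrightarrow> (\<exists>f g.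
     bij_betw f (lside G) (lside H) \<and> bij_betw g (rside G) (rside H) \<and>
     (\<forall>a\<in>lside G. \<forall>b\<in>lside G. (a, b) \<in> lord G \<longleftrightarrow> (f a, f b) \<in> lord H) \<and>
     (\<forall>a\<in>rside G. \<forall>b\<in>rside G. (a, b) \<in> rord G \<longleftrightarrow> (g a, g b) \<in> rord H) \<and>
     (\<forall>a\<in>lside G. \<forall>b\<in>rside G. (a, b) \<in> edges G \<longleftrightarrow> (f a, g b) \<in> edges H))"

definition cross :: "point \<Rightarrow> point \<Rightarrow> real" where
  "cross a b = fst a * snd b - snd a * fst b"

definition dotp :: "point \<Rightarrow> point \<Rightarrow> real" where
  "dotp a b = fst a * fst b + snd a * snd b"

definition acute :: "point \<Rightarrow> point \<Rightarrow> point \<Rightarrow> bool" where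
  "acute a b c \<longleftrightarrow> dotp (a - b) (c - b) > 0"

definition convex_position :: "point set \<Rightarrow> bool" where
  "convex_position P \<longleftrightarrow> finite P \<and> (\<forall>p\<in>P. p \<notin> convex hull (P - {p}))"

definition geom_graph :: "point set \<Rightarrow> (point \<times> point) set \<Rightarrow> bool" where
  "geom_graph P E \<longleftrightarrow> E \<subseteq> P \<times> P \<and> sym E \<and> (\<forall>p. (p, p) \<notin> E)"

definition is_UDG :: "point set \<Rightarrow> (point \<times> point) set \<Rightarrow> bool" where
  "is_UDG P E \<longleftrightarrow> E = {(p, q). p \<in> P \<and> q \<in> P \<and> dist p q = 1}"

definition is_LGG :: "point set \<Rightarrow> (point \<times> point) set \<Rightarrow> bool" where
  "is_LGG P E \<longleftrightarrow> geom_graph P E \<and>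
     (\<forall>u v w. (u, v) \<in> E \<longrightarrow> ((u, w) \<in> E \<or> (v, w) \<in> E) \<longrightarrow> w \<noteq> u \<longrightarrow> w \<noteq> v \<longrightarrow>
        w \<notin> cball (midpoint u v) (dist u v / 2))"

text \<open>p1, p2 antipodal in P: parallel lines through p1 and p2 with all of P between them.\<close>
definition antipodal :: "point set \<Rightarrow> point \<Rightarrow> point \<Rightarrow> bool" where
  "antipodal P p1 p2 \<longleftrightarrow> p1 \<in> P \<and> p2 \<in> P \<and> p1 \<noteq> p2 \<and>
     (\<exists>n. n \<noteq> 0 \<and> (\<forall>q\<in>P. dotp n p1 \<le> dotp n q \<and> dotp n q \<le> dotp n p2))"

text \<open>Line p1p2 drawn horizontally with p2 on the right (direction p2 - p1);
  U = points strictly above, V = points strictly below.\<close>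
definition upperS :: "point set \<Rightarrow> point \<Rightarrow> point \<Rightarrow> point set" where
  "upperS P p1 p2 = {q \<in> P. cross (p2 - p1) (q - p1) > 0}"

definition lowerS :: "point set \<Rightarrow> point \<Rightarrow> point \<Rightarrow> point set" where
  "lowerS P p1 p2 = {q \<in> P. cross (p2 - p1) (q - p1) < 0}"

text \<open>Labelling from right to left along the hull boundary:
  u < u' iff u comes before u' (u_1 is next to p2), i.e. seen from p1, u' is
  counterclockwise of u (upper side) / clockwise of u (lower side).\<close>
definition ordU :: "point set \<Rightarrow> point \<Rightarrow> point \<Rightarrow> (point \<times> point) set" where
  "ordU P p1 p2 = {(u, u'). u \<in> upperS P p1 p2 \<and> u' \<in> upperS P p1 p2 \<and> cross (u - p1) (u' - p1) > 0}"

definition ordV :: "point set \<Rightarrow> point \<Rightarrow> point \<Rightarrow> (point \<times> point) set" where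
  "ordV P p1 p2 = {(v, v'). v \<in> lowerS P p1 p2 \<and> v' \<in> lowerS P p1 p2 \<and> cross (v - p1) (v' - p1) < 0}"

text \<open>w is the point immediately to the right (resp. left) of v along the lower
  boundary of the convex hull of V \<union> {p1, p2}, i.e. along p2, v_1, ..., v_m, p1.\<close>
definition right_nb :: "point set \<Rightarrow> point \<Rightarrow> point \<Rightarrow> point \<Rightarrow> point \<Rightarrow> bool" where
  "right_nb P p1 p2 v w \<longleftrightarrow>
     (w \<in> lowerS P p1 p2 \<and> (w, v) \<in> ordV P p1 p2 \<and>
        \<not> (\<exists>x. (w, x) \<in> ordV P p1 p2 \<and> (x, v) \<in> ordV P p1 p2))
   \<or> (w = p2 \<and> \<not> (\<exists>x. (x, v) \<in> ordV P p1 p2))"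

definition left_nb :: "point set \<Rightarrow> point \<Rightarrow> point \<Rightarrow> point \<Rightarrow> point \<Rightarrow> bool" where
  "left_nb P p1 p2 v w \<longleftrightarrow>
     (w \<in> lowerS P p1 p2 \<and> (v, w) \<in> ordV P p1 p2 \<and>
        \<not> (\<exists>x. (v, x) \<in> ordV P p1 p2 \<and> (x, w) \<in> ordV P p1 p2))
   \<or> (w = p1 \<and> \<not> (\<exists>x. (v, x) \<in> ordV P p1 p2))"

definition acute_r :: "point set \<Rightarrow> point \<Rightarrow> point \<Rightarrow> point \<Rightarrow> point \<Rightarrow> bool" where
  "acute_r P p1 p2 u v \<longleftrightarrow> (\<exists>w. right_nb P p1 p2 v w \<and> acute u v w)"

definition acute_l :: "point set \<Rightarrow> point \<Rightarrow> point \<Rightarrow> point \<Rightarrow> point \<Rightarrow> bool" where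
  "acute_l P p1 p2 u v \<longleftrightarrow> (\<exists>w. left_nb P p1 p2 v w \<and> acute u v w)"

definition crossE :: "point set \<Rightarrow> (point \<times> point) set \<Rightarrow> point \<Rightarrow> point \<Rightarrow> (point \<times> point) set" where
  "crossE P E p1 p2 = {(u, v). u \<in> upperS P p1 p2 \<and> v \<in> lowerS P p1 p2 \<and> (u, v) \<in> E}"

text \<open>A valid split of E' into E1, E2: (u,v) goes to E1 if angle u v v^r is acute,
  otherwise to E2; if both angles are acute either choice is allowed.\<close>
definition valid_split ::
  "point set \<Rightarrow> (point \<times> point) set \<Rightarrow> point \<Rightarrow> point \<Rightarrow> (point \<times> point) set \<Rightarrow> (point \<times> point) set \<Rightarrow> bool" where
  "valid_split P E p1 p2 E1 E2 \<longleftrightarrow>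
     E1 \<union> E2 = crossE P E p1 p2 \<and> E1 \<inter> E2 = {} \<and>
     (\<forall>(u, v) \<in> E1. acute_r P p1 p2 u v) \<and>
     (\<forall>(u, v) \<in> E2. \<not> acute_r P p1 p2 u v \<or> acute_l P p1 p2 u v)"

definition graph1 :: "point set \<Rightarrow> point \<Rightarrow> point \<Rightarrow> (point \<times> point) set \<Rightarrow> point obgraph" where
  "graph1 P p1 p2 E1 = \<lparr>lside = upperS P p1 p2, rside = lowerS P p1 p2, edges = E1,
                        lord = ordU P p1 p2, rord = ordV P p1 p2\<rparr>"

definition graph2 :: "point set \<Rightarrow> point \<Rightarrow> point \<Rightarrow> (point \<times> point) set \<Rightarrow> point obgraph" where
  "graph2 P p1 p2 E2 = \<lparr>lside = upperS P p1 p2, rside = lowerS P p1 p2, edges = E2,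
                        lord = (ordU P p1 p2)\<inverse>, rord = (ordV P p1 p2)\<inverse>\<rparr>"

text \<open>Delete, for every right vertex v, the edge joining v to its neighbour of highest
  order on the left side: an edge (u,v) survives iff v has a neighbour of higher order than u.\<close>
definition delete_top :: "'a obgraph \<Rightarrow> 'a obgraph" where
  "delete_top G = G\<lparr>edges := {(u, v) \<in> edges G. \<exists>u'. (u', v) \<in> edges G \<and> (u, u') \<in> lord G}\<rparr>"

definition derived_class :: "(point set \<Rightarrow> (point \<times> point) set \<Rightarrow> bool) \<Rightarrow> point obgraph set" where
  "derived_class Q = {G. \<exists>P E p1 p2 E1 E2.
      convex_position P \<and> Q P E \<and> antipodal P p1 p2 \<and> valid_split P E p1 p2 E1 E2 \<and>
      (G = delete_top (graph1 P p1 p2 E1) \<or> G = delete_top (graph2 P p1 p2 E2))}"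

definition G_UDG :: "point obgraph set" where
  "G_UDG = derived_class is_UDG"

definition G_LGG :: "point obgraph set" where
  "G_LGG = derived_class is_LGG"

end

theory Submission
  imports Defs
begin

definition sqd :: "point \<Rightarrow> point \<Rightarrow> real" where
  "sqd x y = (fst x - fst y)^2 + (snd x - snd y)^2"

lemma sqd_nonneg: "sqd x y \<ge> 0" by (simp add: sqd_def)

lemma dist_sqd: "dist x y = sqrt (sqd x y)"
  by (simp add: dist_prod_def dist_real_def sqd_def)

lemma sqd_pos: "x \<noteq> y \<Longrightarrow> sqd x y > 0"
proof -
  assume "x \<noteq> y"
  then have "fst x \<noteq> fst y \<or> snd x \<noteq> snd y" by (simp add: prod_eq_iff)
  then show ?thesis unfolding sqd_def
    by (metis add_nonneg_pos add_pos_nonneg right_minus_eq zero_less_power2 zero_le_power2)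
qed

lemma cball_iff: "w \<in> cball (midpoint u v) (dist u v / 2) \<longleftrightarrow> dotp (u - w) (v - w) \<le> 0"
proof -
  have "w \<in> cball (midpoint u v) (dist u v / 2) \<longleftrightarrow> sqrt (sqd (midpoint u v) w) \<le> sqrt (sqd u v) / 2"
    by (simp add: dist_sqd)
  also have "sqrt (sqd u v) / 2 = sqrt (sqd u v / 4)"
    by (simp add: real_sqrt_divide)
  also have "sqrt (sqd (midpoint u v) w) \<le> sqrt (sqd u v / 4) \<longleftrightarrow> sqd (midpoint u v) w \<le> sqd u v / 4"
    by simp
  also have "sqd (midpoint u v) w - sqd u v / 4 = dotp (u - w) (v - w)"
    by (simp add: sqd_def dotp_def midpoint_def power2_eq_square field_simps)
  then have "sqd (midpoint u v) w \<le> sqd u v / 4 \<longleftrightarrow> dotp (u - w) (v - w) \<le> 0" by linarith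
  finally show ?thesis .
qed

lemma dist1_sqd: "dist x y = 1 \<Longrightarrow> sqd x y = 1"
  by (simp add: dist_sqd)

lemma sqd_commute: "sqd x y = sqd y x"
  by (simp add: sqd_def power2_commute)

lemma dotp_law: "dotp (u - w) (v - w) = (sqd u w + sqd v w - sqd u v) / 2"
  by (simp add: sqd_def dotp_def power2_eq_square field_simps)

lemma udg_lgg: "is_UDG P E \<Longrightarrow> is_LGG P E"
proof -
  assume U: "is_UDG P E"
  have gg: "geom_graph P E"
    using U unfolding geom_graph_def is_UDG_def sym_def by (auto simp: dist_commute)
  have "w \<notin> cball (midpoint u v) (dist u v / 2)"
    if "(u, v) \<in> E" "(u, w) \<in> E \<or> (v, w) \<in> E" "w \<noteq> u" "w \<noteq> v" for u v w
  proof -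
    have uv: "sqd u v = 1" using that(1) U by (auto simp: is_UDG_def dist1_sqd)
    have "dotp (u - w) (v - w) > 0"
    proof (cases "(u, w) \<in> E")
      case True
      then have "sqd u w = 1" using U by (auto simp: is_UDG_def dist1_sqd)
      moreover have "sqd v w > 0" using sqd_pos that(4) by metis
      ultimately show ?thesis using uv by (simp add: dotp_law)
    next
      case False
      then have "(v, w) \<in> E" using that(2) by simp
      then have "sqd v w = 1" using U by (auto simp: is_UDG_def dist1_sqd)
      moreover have "sqd u w > 0" using sqd_pos that(3) by metis
      ultimately show ?thesis using uv by (simp add: dotp_law)
    qed
    then show ?thesis using cball_iff[of w u v] by linarith
  qed
  then show ?thesis using gg unfolding is_LGG_def by blast
qed

lemma derived_mono: "(\<And>P E. Q1 P E \<Longrightarrow> Q2 P E) \<Longrightarrow> derived_class Q1 \<subseteq> derived_class Q2"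
  unfolding derived_class_def by blast

lemma part1: "G_UDG \<subseteq> G_LGG"
  unfolding G_UDG_def G_LGG_def by (rule derived_mono) (rule udg_lgg)

lemma hull3_mem:
  assumes "a \<ge> 0" "b \<ge> 0" "c \<ge> 0" "a + b + c = 1"
  shows "a *\<^sub>R p + b *\<^sub>R q + c *\<^sub>R r \<in> convex hull {p, q, r}"
  using assms unfolding convex_hull_3 by blast

lemma cvx_triple:
  assumes cp: "convex_position P" and P: "p1 \<in> P" "x \<in> P" "y \<in> P" "z \<in> P"
    and o1: "cross (x - p1) (y - p1) > 0" and o2: "cross (y - p1) (z - p1) > 0"
    and o3: "cross (x - p1) (z - p1) > 0"
  shows "cross (y - x) (z - x) > 0"
proof (rule ccontr)
  assume neg: "\<not> cross (y - x) (z - x) > 0"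
  define k where "k = cross (x - p1) (z - p1)"
  define a where "a = cross (y - p1) (z - p1) / k"
  define b where "b = cross (x - p1) (y - p1) / k"
  have k: "k > 0" using o3 k_def by simp
  have a: "a > 0" using o2 k by (simp add: a_def)
  have b: "b > 0" using o1 k by (simp add: b_def)
  have id1: "cross (y - x) (z - x) = cross (y - p1) (z - p1) + cross (x - p1) (y - p1) - k"
    by (simp add: k_def cross_def algebra_simps)
  have "a + b \<le> 1"
  proof -
    have "a + b = (cross (y - p1) (z - p1) + cross (x - p1) (y - p1)) / k"
      by (simp add: a_def b_def add_divide_distrib)
    also have "\<dots> \<le> 1" using neg id1 k by (simp add: divide_le_eq)
    finally show ?thesis .
  qed
  have yeq: "y = (1 - a - b) *\<^sub>R p1 + a *\<^sub>R x + b *\<^sub>R z"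
  proof -
    have kk: "k \<noteq> 0" using k by simp
    have ka: "k * a = cross (y - p1) (z - p1)" and kb: "k * b = cross (x - p1) (y - p1)"
      using kk by (auto simp: a_def b_def)
    have p1: "k * fst y = (k - k * a - k * b) * fst p1 + (k * a) * fst x + (k * b) * fst z"
      unfolding ka kb unfolding k_def cross_def by (simp add: algebra_simps)
    have p2: "k * snd y = (k - k * a - k * b) * snd p1 + (k * a) * snd x + (k * b) * snd z"
      unfolding ka kb unfolding k_def cross_def by (simp add: algebra_simps)
    have e1: "fst y = (1 - a - b) * fst p1 + a * fst x + b * fst z"
    proof -
      have "k * fst y = k * ((1 - a - b) * fst p1 + a * fst x + b * fst z)"
        using p1 by (simp add: algebra_simps)
      then show ?thesis using kk by simp
    qed
    have e2: "snd y = (1 - a - b) * snd p1 + a * snd x + b * snd z"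
    proof -
      have "k * snd y = k * ((1 - a - b) * snd p1 + a * snd x + b * snd z)"
        using p2 by (simp add: algebra_simps)
      then show ?thesis using kk by simp
    qed
    show ?thesis using e1 e2 by (simp add: prod_eq_iff)
  qed
  have "y \<in> convex hull {p1, x, z}"
    unfolding yeq by (rule hull3_mem) (use a b \<open>a + b \<le> 1\<close> in auto)
  moreover have "{p1, x, z} \<subseteq> P - {y}"
    using P o1 o2 by (auto simp: cross_def)
  ultimately have "y \<in> convex hull (P - {y})" using hull_mono by blast
  then show False using cp P unfolding convex_position_def by blast
qed

lemma VU:
  assumes cp: "convex_position P" and ap: "antipodal P p1 p2"
    and v: "v \<in> lowerS P p1 p2" and u: "u \<in> upperS P p1 p2"
  shows "cross (v - p1) (u - p1) > 0"
proof -
  obtain n where n0: "n \<noteq> 0" and nP: "\<forall>q\<in>P. dotp n p1 \<le> dotp n q \<and> dotp n q \<le> dotp n p2"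
    using ap unfolding antipodal_def by blast
  have p1P: "p1 \<in> P" and p2P: "p2 \<in> P" using ap unfolding antipodal_def by auto
  have vP: "v \<in> P" and cdx: "cross (p2 - p1) (v - p1) < 0" using v unfolding lowerS_def by auto
  have uP: "u \<in> P" and cdy: "cross (p2 - p1) (u - p1) > 0" using u unfolding upperS_def by auto
  define nx where "nx = dotp n (v - p1)"
  define ny where "ny = dotp n (u - p1)"
  define nd where "nd = dotp n (p2 - p1)"
  have dlin: "\<And>a. dotp n (a - p1) = dotp n a - dotp n p1" by (simp add: dotp_def algebra_simps)
  have nx: "nx \<ge> 0" using nP vP by (simp add: nx_def dlin)
  have ny: "ny \<ge> 0" "ny \<le> nd" using nP uP by (auto simp: ny_def nd_def dlin)
  have nd: "nd > 0"
  proof (rule ccontr)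
    assume "\<not> nd > 0"
    then have "nd = 0" "ny = 0" using ny by linarith+
    then have e1: "fst n * cross (p2 - p1) (u - p1) = 0" and e2: "snd n * cross (p2 - p1) (u - p1) = 0"
    proof -
      assume a: "nd = 0" "ny = 0"
      have "fst n * cross (p2 - p1) (u - p1) = snd (u - p1) * nd - snd (p2 - p1) * ny"
        by (simp add: nd_def ny_def dotp_def cross_def algebra_simps)
      then show "fst n * cross (p2 - p1) (u - p1) = 0" using a by simp
      have "snd n * cross (p2 - p1) (u - p1) = fst (p2 - p1) * ny - fst (u - p1) * nd"
        by (simp add: nd_def ny_def dotp_def cross_def algebra_simps)
      then show "snd n * cross (p2 - p1) (u - p1) = 0" using a by simp
    qed
    then have "fst n = 0" "snd n = 0" using cdy by auto
    then show False using n0 by (simp add: prod_eq_iff)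
  qed
  have idn: "cross (v - p1) (u - p1) * nd = cross (p2 - p1) (u - p1) * nx - cross (p2 - p1) (v - p1) * ny"
    by (simp add: nd_def nx_def ny_def dotp_def cross_def algebra_simps)
  have "cross (p2 - p1) (u - p1) * nx - cross (p2 - p1) (v - p1) * ny \<ge> 0"
  proof -
    have "cross (p2 - p1) (u - p1) * nx \<ge> 0" using cdy nx by simp
    moreover have "cross (p2 - p1) (v - p1) * ny \<le> 0" using cdx ny by (simp add: mult_nonpos_nonneg)
    ultimately show ?thesis by linarith
  qed
  then have ge: "cross (v - p1) (u - p1) \<ge> 0" using idn nd
    by (metis zero_le_mult_iff not_less)
  show ?thesis
  proof (rule ccontr)
    assume "\<not> ?thesis"
    then have c0: "cross (v - p1) (u - p1) = 0" using ge by linarith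
    define cy where "cy = cross (p2 - p1) (u - p1)"
    define cx where "cx = cross (p2 - p1) (v - p1)"
    define a where "a = cy / (cy - cx)"
    define b where "b = - cx / (cy - cx)"
    have den: "cy - cx > 0" using cdx cdy cx_def cy_def by simp
    have a: "a \<ge> 0" "b \<ge> 0" "a + b = 1"
    proof -
      show "a \<ge> 0" using den cdy by (simp add: a_def cy_def)
      show "b \<ge> 0" using den cdx unfolding b_def cx_def[symmetric] by (simp add: divide_nonpos_pos)
      show "a + b = 1" using den unfolding a_def b_def add_divide_distrib[symmetric] by simp
    qed
    have id2: "cy * fst (v - p1) - cx * fst (u - p1) = cross (v - p1) (u - p1) * fst (p2 - p1)"
      "cy * snd (v - p1) - cx * snd (u - p1) = cross (v - p1) (u - p1) * snd (p2 - p1)"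
      by (simp_all add: cx_def cy_def cross_def algebra_simps)
    have "p1 = a *\<^sub>R v + b *\<^sub>R u + 0 *\<^sub>R u"
    proof -
      have ca: "(cy - cx) * a = cy" and cb: "(cy - cx) * b = - cx" using den by (auto simp: a_def b_def)
      have f: "(cy - cx) * fst p1 = (cy - cx) * (a * fst v + b * fst u)"
      proof -
        have "(cy - cx) * (a * fst v + b * fst u) = ((cy - cx) * a) * fst v + ((cy - cx) * b) * fst u"
          by (simp add: algebra_simps)
        also have "\<dots> = cy * fst v - cx * fst u" unfolding ca cb by simp
        finally show ?thesis using id2(1) c0 by (simp add: algebra_simps)
      qed
      have s: "(cy - cx) * snd p1 = (cy - cx) * (a * snd v + b * snd u)"
      proof -
        have "(cy - cx) * (a * snd v + b * snd u) = ((cy - cx) * a) * snd v + ((cy - cx) * b) * snd u"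
          by (simp add: algebra_simps)
        also have "\<dots> = cy * snd v - cx * snd u" unfolding ca cb by simp
        finally show ?thesis using id2(2) c0 by (simp add: algebra_simps)
      qed
      show ?thesis using f s den by (simp add: prod_eq_iff)
    qed
    also have "\<dots> \<in> convex hull {v, u, u}" by (rule hull3_mem) (use a in auto)
    finally have "p1 \<in> convex hull {v, u, u}" .
    moreover have "{v, u, u} \<subseteq> P - {p1}" using vP uP cdx cdy by (auto simp: cross_def)
    ultimately have "p1 \<in> convex hull (P - {p1})" using hull_mono by blast
    then show False using cp p1P unfolding convex_position_def by blast
  qed
qed

lemma strict_tri:
  fixes p q r :: point
  assumes c: "cross (q - p) (r - q) \<noteq> 0"
  shows "dist p r < dist p q + dist q r"
proof -
  define A where "A = sqd p q"
  define B where "B = sqd q r"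
  define C where "C = sqd p r"
  define ab where "ab = dotp (q - p) (r - q)"
  have C: "C = A + B + 2 * ab"
    by (simp add: A_def B_def C_def ab_def sqd_def dotp_def power2_eq_square algebra_simps)
  have lag: "ab ^ 2 + (cross (q - p) (r - q)) ^ 2 = A * B"
    by (simp add: A_def B_def ab_def sqd_def dotp_def cross_def power2_eq_square algebra_simps)
  have A0: "A \<ge> 0" and B0: "B \<ge> 0" by (simp_all add: A_def B_def sqd_nonneg)
  have "(cross (q - p) (r - q)) ^ 2 > 0" using c by simp
  then have "ab ^ 2 < A * B" using lag by linarith
  then have "\<bar>ab\<bar> < sqrt (A * B)"
    using real_sqrt_less_mono[of "ab^2" "A*B"] by simp
  then have abl: "ab < sqrt A * sqrt B" by (simp add: real_sqrt_mult)
  have "C < (sqrt A + sqrt B) ^ 2"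
    using C abl A0 B0 by (simp add: power2_eq_square algebra_simps)
  then have "sqrt C < sqrt ((sqrt A + sqrt B) ^ 2)" by (rule real_sqrt_less_mono)
  then have "sqrt C < sqrt A + sqrt B" using A0 B0 by simp
  then show ?thesis by (simp add: dist_sqd A_def B_def C_def)
qed

lemma quad:
  fixes P Q R S :: point
  assumes o1: "cross (Q - P) (R - P) > 0" and o2: "cross (R - P) (S - P) > 0"
    and o3: "cross (R - Q) (S - Q) > 0" and o4: "cross (S - Q) (P - Q) > 0"
  shows "dist Q R + dist S P < dist P R + dist Q S"
proof -
  define a1 where "a1 = cross (Q - P) (R - P)"
  define a2 where "a2 = cross (R - P) (S - P)"
  define a3 where "a3 = cross (R - Q) (S - Q)"
  define a4 where "a4 = cross (S - Q) (P - Q)"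
  define D where "D = a1 + a2"
  have D34: "D = a3 + a4" by (simp add: D_def a1_def a2_def a3_def a4_def cross_def algebra_simps)
  have Dp: "D > 0" using o1 o2 by (simp add: D_def a1_def a2_def)
  define t where "t = a4 / D"
  define s where "s = a1 / D"
  have t: "0 \<le> t" "t \<le> 1" using o3 o4 Dp D34 by (auto simp: t_def a3_def a4_def)
  have s: "0 < s" "s \<le> 1" using o1 o2 Dp by (auto simp: s_def a1_def a2_def D_def)
  define X where "X = P + t *\<^sub>R (R - P)"
  have ident: "a3 * fst P + a4 * fst R = a2 * fst Q + a1 * fst S"
    "a3 * snd P + a4 * snd R = a2 * snd Q + a1 * snd S"
    by (simp_all add: a1_def a2_def a3_def a4_def cross_def algebra_simps)
  have X2: "X = Q + s *\<^sub>R (S - Q)"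
  proof -
    have Dt: "D * t = a4" and Ds: "D * s = a1" using Dp by (auto simp: t_def s_def)
    have "D * fst X = D * fst (Q + s *\<^sub>R (S - Q))"
    proof -
      have "D * fst X = (D - D * t) * fst P + (D * t) * fst R" by (simp add: X_def algebra_simps)
      also have "\<dots> = a3 * fst P + a4 * fst R" unfolding Dt using D34 by simp
      also have "\<dots> = a2 * fst Q + a1 * fst S" by (rule ident(1))
      also have "\<dots> = (D - D * s) * fst Q + (D * s) * fst S" unfolding Ds using D_def by simp
      also have "\<dots> = D * fst (Q + s *\<^sub>R (S - Q))" by (simp add: algebra_simps)
      finally show ?thesis .
    qed
    moreover have "D * snd X = D * snd (Q + s *\<^sub>R (S - Q))"
    proof -
      have "D * snd X = (D - D * t) * snd P + (D * t) * snd R" by (simp add: X_def algebra_simps)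
      also have "\<dots> = a3 * snd P + a4 * snd R" unfolding Dt using D34 by simp
      also have "\<dots> = a2 * snd Q + a1 * snd S" by (rule ident(2))
      also have "\<dots> = (D - D * s) * snd Q + (D * s) * snd S" unfolding Ds using D_def by simp
      also have "\<dots> = D * snd (Q + s *\<^sub>R (S - Q))" by (simp add: algebra_simps)
      finally show ?thesis .
    qed
    ultimately show ?thesis using Dp by (simp add: prod_eq_iff)
  qed
  have dPR: "dist P R = dist P X + dist X R"
  proof -
    have "dist P X = t * dist P R"
      using t by (simp add: X_def dist_norm norm_minus_commute)
    moreover have "dist X R = (1 - t) * dist P R"
    proof -
      have "X - R = (1 - t) *\<^sub>R (P - R)" by (simp add: X_def algebra_simps)
      then show ?thesis using t by (simp add: dist_norm)
    qed
    ultimately show ?thesis by (simp add: algebra_simps)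
  qed
  have dQS: "dist Q S = dist Q X + dist X S"
  proof -
    have "dist Q X = s * dist Q S"
      using s by (simp add: X2 dist_norm norm_minus_commute)
    moreover have "dist X S = (1 - s) * dist Q S"
    proof -
      have "X - S = (1 - s) *\<^sub>R (Q - S)" by (simp add: X2 algebra_simps)
      then show ?thesis using s by (simp add: dist_norm)
    qed
    ultimately show ?thesis by (simp add: algebra_simps)
  qed
  have cr: "cross (X - Q) (R - X) = - s * a3"
    by (simp add: X2 a3_def cross_def algebra_simps)
  have "cross (X - Q) (R - X) \<noteq> 0" using cr s o3 by (simp add: a3_def)
  then have lt: "dist Q R < dist Q X + dist X R" by (rule strict_tri)
  have le: "dist S P \<le> dist S X + dist X P" by (rule dist_triangle)
  show ?thesis using lt le dPR dQS by (simp add: dist_commute)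
qed

lemma quadP:
  assumes cp: "convex_position P" and ap: "antipodal P p1 p2"
    and a: "a \<in> lowerS P p1 p2" and c: "c \<in> lowerS P p1 p2" and ca: "(c, a) \<in> ordV P p1 p2"
    and x: "x \<in> upperS P p1 p2" and y: "y \<in> upperS P p1 p2" and xy: "(x, y) \<in> ordU P p1 p2"
  shows "dist c x + dist y a < dist a x + dist c y"
proof -
  have p1P: "p1 \<in> P" using ap unfolding antipodal_def by auto
  have inP: "a \<in> P" "c \<in> P" "x \<in> P" "y \<in> P" using a c x y unfolding lowerS_def upperS_def by auto
  have ac: "cross (a - p1) (c - p1) > 0"
  proof -
    have "cross (c - p1) (a - p1) < 0" using ca unfolding ordV_def by auto
    moreover have "cross (a - p1) (c - p1) = - cross (c - p1) (a - p1)" by (simp add: cross_def)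
    ultimately show ?thesis by simp
  qed
  have xy': "cross (x - p1) (y - p1) > 0" using xy unfolding ordU_def by auto
  have ax: "cross (a - p1) (x - p1) > 0" and ay: "cross (a - p1) (y - p1) > 0"
    and cx: "cross (c - p1) (x - p1) > 0" and cy: "cross (c - p1) (y - p1) > 0"
    using VU[OF cp ap] a c x y by auto
  have o1: "cross (c - a) (x - a) > 0" by (rule cvx_triple[OF cp p1P inP(1,2,3) ac cx ax])
  have o2: "cross (x - a) (y - a) > 0" by (rule cvx_triple[OF cp p1P inP(1,3,4) ax xy' ay])
  have o3: "cross (x - c) (y - c) > 0" by (rule cvx_triple[OF cp p1P inP(2,3,4) cx xy' cy])
  have o4': "cross (c - a) (y - a) > 0" by (rule cvx_triple[OF cp p1P inP(1,2,4) ac cy ay])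
  have "cross (y - c) (a - c) = cross (c - a) (y - a)" by (simp add: cross_def algebra_simps)
  then have o4: "cross (y - c) (a - c) > 0" using o4' by simp
  show ?thesis using quad[OF o1 o2 o3 o4] .
qed

lemma hexACB:
  assumes cp: "convex_position P" and ap: "antipodal P p1 p2"
    and U: "u1 \<in> upperS P p1 p2" "u2 \<in> upperS P p1 p2" "u3 \<in> upperS P p1 p2"
    and V: "A \<in> lowerS P p1 p2" "B \<in> lowerS P p1 p2" "C \<in> lowerS P p1 p2"
    and oU: "(u1, u2) \<in> ordU P p1 p2" "(u1, u3) \<in> ordU P p1 p2"
    and oV: "(C, A) \<in> ordV P p1 p2" "(B, C) \<in> ordV P p1 p2"
    and d: "dist u1 A = 1" "dist u2 A = 1" "dist u2 C = 1" "dist u3 C = 1" "dist u1 B = 1" "dist u3 B = 1"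
  shows False
proof -
  have q1: "dist C u1 + dist u2 A < dist A u1 + dist C u2"
    by (rule quadP[OF cp ap V(1) V(3) oV(1) U(1) U(2) oU(1)])
  have q2: "dist B u1 + dist u3 C < dist C u1 + dist B u3"
    by (rule quadP[OF cp ap V(3) V(2) oV(2) U(1) U(3) oU(2)])
  show False using q1 q2 d by (simp add: dist_commute)
qed

lemma hexBAC:
  assumes cp: "convex_position P" and ap: "antipodal P p1 p2"
    and U: "u1 \<in> upperS P p1 p2" "u2 \<in> upperS P p1 p2" "u3 \<in> upperS P p1 p2"
    and V: "A \<in> lowerS P p1 p2" "B \<in> lowerS P p1 p2" "C \<in> lowerS P p1 p2"
    and oU: "(u2, u3) \<in> ordU P p1 p2" "(u1, u3) \<in> ordU P p1 p2"
    and oV: "(C, A) \<in> ordV P p1 p2" "(A, B) \<in> ordV P p1 p2"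
    and d: "dist u1 A = 1" "dist u2 A = 1" "dist u2 C = 1" "dist u3 C = 1" "dist u1 B = 1" "dist u3 B = 1"
  shows False
proof -
  have q1: "dist C u2 + dist u3 A < dist A u2 + dist C u3"
    by (rule quadP[OF cp ap V(1) V(3) oV(1) U(2) U(3) oU(1)])
  have q2: "dist A u1 + dist u3 B < dist B u1 + dist A u3"
    by (rule quadP[OF cp ap V(2) V(1) oV(2) U(1) U(3) oU(2)])
  show False using q1 q2 d by (simp add: dist_commute)
qed

lemma no_iso_generic:
  assumes L: "u1 \<in> lside G" "u2 \<in> lside G" "u3 \<in> lside G"
    and R: "A \<in> rside G" "B \<in> rside G" "C \<in> rside G"
    and oL: "(u1, u2) \<in> lord G" "(u1, u3) \<in> lord G"
    and oR: "(C, A) \<in> rord G" "(B, C) \<in> rord G"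
    and e: "(u1, A) \<in> edges G" "(u2, A) \<in> edges G" "(u2, C) \<in> edges G"
           "(u3, C) \<in> edges G" "(u1, B) \<in> edges G" "(u3, B) \<in> edges G"
    and H: "H \<in> G_UDG" and iso: "obg_iso G H"
  shows False
proof -
  obtain f g where bf: "bij_betw f (lside G) (lside H)" and bg: "bij_betw g (rside G) (rside H)"
    and fo: "\<forall>a\<in>lside G. \<forall>b\<in>lside G. (a, b) \<in> lord G \<longleftrightarrow> (f a, f b) \<in> lord H"
    and go: "\<forall>a\<in>rside G. \<forall>b\<in>rside G. (a, b) \<in> rord G \<longleftrightarrow> (g a, g b) \<in> rord H"
    and fe: "\<forall>a\<in>lside G. \<forall>b\<in>rside G. (a, b) \<in> edges G \<longleftrightarrow> (f a, g b) \<in> edges H"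
    using iso unfolding obg_iso_def by blast
  obtain P E p1 p2 E1 E2 where cp: "convex_position P" and U: "is_UDG P E" and ap: "antipodal P p1 p2"
    and vs: "valid_split P E p1 p2 E1 E2"
    and Hc: "H = delete_top (graph1 P p1 p2 E1) \<or> H = delete_top (graph2 P p1 p2 E2)"
    using H unfolding G_UDG_def derived_class_def by blast
  have sides: "lside H = upperS P p1 p2" "rside H = lowerS P p1 p2"
    using Hc by (auto simp: delete_top_def graph1_def graph2_def)
  have eH: "edges H \<subseteq> crossE P E p1 p2"
    using Hc vs by (auto simp: delete_top_def graph1_def graph2_def valid_split_def)
  have d1: "dist a b = 1" if "(a, b) \<in> edges H" for a b
    using eH that U by (auto simp: crossE_def is_UDG_def)
  have fU: "f u1 \<in> upperS P p1 p2" "f u2 \<in> upperS P p1 p2" "f u3 \<in> upperS P p1 p2"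
    using L bf sides by (auto simp: bij_betw_def)
  have gV: "g A \<in> lowerS P p1 p2" "g B \<in> lowerS P p1 p2" "g C \<in> lowerS P p1 p2"
    using R bg sides by (auto simp: bij_betw_def)
  have d: "dist (f u1) (g A) = 1" "dist (f u2) (g A) = 1" "dist (f u2) (g C) = 1"
     "dist (f u3) (g C) = 1" "dist (f u1) (g B) = 1" "dist (f u3) (g B) = 1"
    using e fe L R d1 by blast+
  have fl: "(f u1, f u2) \<in> lord H" "(f u1, f u3) \<in> lord H" using oL fo L by blast+
  have gr: "(g C, g A) \<in> rord H" "(g B, g C) \<in> rord H" using oR go R by blast+
  from Hc show False
  proof
    assume H1: "H = delete_top (graph1 P p1 p2 E1)"
    then have "lord H = ordU P p1 p2" "rord H = ordV P p1 p2"
      by (simp_all add: delete_top_def graph1_def)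
    then show False using hexACB[OF cp ap fU gV] fl gr d by simp
  next
    assume H2: "H = delete_top (graph2 P p1 p2 E2)"
    then have "lord H = (ordU P p1 p2)\<inverse>" "rord H = (ordV P p1 p2)\<inverse>"
      by (simp_all add: delete_top_def graph2_def)
    then have o: "(f u2, f u1) \<in> ordU P p1 p2" "(f u3, f u1) \<in> ordU P p1 p2"
      "(g A, g C) \<in> ordV P p1 p2" "(g C, g B) \<in> ordV P p1 p2" using fl gr by auto
    show False
      by (rule hexBAC[OF cp ap fU(3) fU(2) fU(1) gV(3) gV(2) gV(1) o(1) o(2) o(3) o(4)])
         (use d in \<open>simp_all add: dist_commute\<close>)
  qed
qed

definition "xq1 = ((-40::real), (0::real))"
definition "xq2 = ((40::real), (0::real))"
definition "xA = ((-29::real), (-9::real))"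
definition "xC = ((16::real), (-39::real))"
definition "xB = ((35::real), (-22::real))"
definition "xu1 = ((38::real), (30::real))"
definition "xu2 = ((32::real), (38::real))"
definition "xtA = ((26::real), (45::real))"
definition "xu3 = ((-17::real), (29::real))"
definition "xtC = ((-30::real), (21::real))"
definition "xtB = ((-38::real), (6::real))"

lemmas pts = xq1_def xq2_def xA_def xB_def xC_def xu1_def xu2_def xu3_def xtA_def xtB_def xtC_def

definition "PS = {xq1, xq2, xA, xB, xC, xu1, xu2, xu3, xtA, xtB, xtC}"
definition "E0 = {(xu1, xA), (xu2, xA), (xu2, xC), (xu3, xC), (xu1, xB), (xu3, xB),
                  (xtA, xA), (xtC, xC), (xtB, xB)}"
definition "ES = E0 \<union> E0\<inverse>"

lemma upper_eq: "upperS PS xq1 xq2 = {xu1, xu2, xu3, xtA, xtB, xtC}"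
  unfolding upperS_def PS_def by (auto simp: pts cross_def)

lemma lower_eq: "lowerS PS xq1 xq2 = {xA, xB, xC}"
  unfolding lowerS_def PS_def by (auto simp: pts cross_def)

lemma ordV_eq: "ordV PS xq1 xq2 = {(xB, xC), (xB, xA), (xC, xA)}"
  unfolding ordV_def lower_eq by (auto simp: pts cross_def)

lemma E0_sub: "E0 \<subseteq> upperS PS xq1 xq2 \<times> lowerS PS xq1 xq2"
  unfolding upper_eq lower_eq E0_def by auto

lemma UL_disj: "upperS P p1 p2 \<inter> lowerS P p1 p2 = {}"
  unfolding upperS_def lowerS_def by auto

lemma crossE_eq: "crossE PS ES xq1 xq2 = E0"
proof -
  have "crossE PS ES xq1 xq2 = ES \<inter> (upperS PS xq1 xq2 \<times> lowerS PS xq1 xq2)"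
    unfolding crossE_def by auto
  also have "\<dots> = E0" using E0_sub UL_disj[of PS xq1 xq2] unfolding ES_def by blast
  finally show ?thesis .
qed

lemma sep_hull:
  fixes a p :: point and S :: "point set"
  assumes "\<forall>q\<in>S. fst a * fst q + snd a * snd q \<le> b" "fst a * fst p + snd a * snd p > b"
  shows "p \<notin> convex hull S"
proof -
  have "convex hull S \<subseteq> {x. a \<bullet> x \<le> b}"
    by (rule hull_minimal) (use assms(1) convex_halfspace_le[of a b] in \<open>auto simp: inner_prod_def\<close>)
  then show ?thesis using assms(2) by (auto simp: inner_prod_def)
qed

lemma cp_PS: "convex_position PS"
proof -
  have h: "p \<notin> convex hull (PS - {p})"
    if "\<forall>q\<in>PS. q \<noteq> p \<longrightarrow> fst a * fst q + snd a * snd q \<le> b" "fst a * fst p + snd a * snd p > b"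
    for p a b using that by (intro sep_hull) auto
  have "xq1 \<notin> convex hull (PS - {xq1})" by (rule h[of _ "(-15,-9)" 516]) (simp_all add: PS_def pts)
  moreover have "xA \<notin> convex hull (PS - {xA})" by (rule h[of _ "(-39,-56)" 1560]) (simp_all add: PS_def pts)
  moreover have "xC \<notin> convex hull (PS - {xC})" by (rule h[of _ "(-13,-64)" 953]) (simp_all add: PS_def pts)
  moreover have "xB \<notin> convex hull (PS - {xB})" by (rule h[of _ "(39,-24)" 1560]) (simp_all add: PS_def pts)
  moreover have "xq2 \<notin> convex hull (PS - {xq2})" by (rule h[of _ "(52,-3)" 1886]) (simp_all add: PS_def pts)
  moreover have "xu1 \<notin> convex hull (PS - {xu1})" by (rule h[of _ "(38,8)" 1520]) (simp_all add: PS_def pts)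
  moreover have "xu2 \<notin> convex hull (PS - {xu2})" by (rule h[of _ "(15,12)" 930]) (simp_all add: PS_def pts)
  moreover have "xtA \<notin> convex hull (PS - {xtA})" by (rule h[of _ "(-9,49)" 1574]) (simp_all add: PS_def pts)
  moreover have "xu3 \<notin> convex hull (PS - {xu3})" by (rule h[of _ "(-24,56)" 1896]) (simp_all add: PS_def pts)
  moreover have "xtC \<notin> convex hull (PS - {xtC})" by (rule h[of _ "(-23,21)" 1000]) (simp_all add: PS_def pts)
  moreover have "xtB \<notin> convex hull (PS - {xtB})" by (rule h[of _ "(-21,10)" 840]) (simp_all add: PS_def pts)
  ultimately show ?thesis unfolding convex_position_def PS_def by auto
qed

lemma LGG_intro:
  assumes "geom_graph P E"
    and "\<And>u v w. (u, v) \<in> E \<Longrightarrow> (u, w) \<in> E \<or> (v, w) \<in> E \<Longrightarrow> w \<noteq> u \<Longrightarrow> w \<noteq> v \<Longrightarrow> dotp (u - w) (v - w) > 0"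
  shows "is_LGG P E"
  using assms cball_iff unfolding is_LGG_def by (meson not_le)

lemma E0_PS: "E0 \<subseteq> PS \<times> PS"
  unfolding E0_def PS_def by simp

lemma ES_PS: "ES \<subseteq> PS \<times> PS"
  using E0_PS unfolding ES_def by auto

lemma chk_lgg: "\<forall>e\<in>E0. \<forall>w\<in>PS. ((fst e, w) \<in> ES \<or> (snd e, w) \<in> ES) \<longrightarrow> w \<noteq> fst e \<longrightarrow> w \<noteq> snd e \<longrightarrow>
    dotp (fst e - w) (snd e - w) > 0"
  unfolding ES_def E0_def PS_def by (simp add: pts dotp_def)

lemma lgg_PS: "is_LGG PS ES"
proof (rule LGG_intro)
  have irr: "(p, p) \<notin> E0" for p unfolding E0_def by (auto simp: pts)
  show "geom_graph PS ES"
    unfolding geom_graph_def using ES_PS irr by (auto simp: ES_def sym_def)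
next
  fix u v w assume a: "(u, v) \<in> ES" "(u, w) \<in> ES \<or> (v, w) \<in> ES" "w \<noteq> u" "w \<noteq> v"
  have wP: "w \<in> PS" using a(2) ES_PS by auto
  have dc: "dotp (u - w) (v - w) = dotp (v - w) (u - w)" by (simp add: dotp_def mult.commute)
  show "dotp (u - w) (v - w) > 0"
  proof (cases "(u, v) \<in> E0")
    case True then show ?thesis using chk_lgg wP a by fastforce
  next
    case False
    then have "(v, u) \<in> E0" using a(1) by (auto simp: ES_def)
    then show ?thesis using chk_lgg wP a dc by fastforce
  qed
qed

lemma ap_PS: "antipodal PS xq1 xq2"
  unfolding antipodal_def
  by (rule conjI, simp add: PS_def, rule conjI, simp add: PS_def, rule conjI, simp add: pts,
      rule exI[of _ "(1, 0)"]) (simp add: PS_def pts dotp_def zero_prod_def)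

lemma rnA: "right_nb PS xq1 xq2 xA xC"
  unfolding right_nb_def lower_eq ordV_eq by (auto simp: pts)
lemma rnC: "right_nb PS xq1 xq2 xC xB"
  unfolding right_nb_def lower_eq ordV_eq by (auto simp: pts)
lemma rnB: "right_nb PS xq1 xq2 xB xq2"
  unfolding right_nb_def lower_eq ordV_eq by (auto simp: pts)

lemma acr: "right_nb PS xq1 xq2 v w \<Longrightarrow> acute u v w \<Longrightarrow> acute_r PS xq1 xq2 u v"
  unfolding acute_r_def by blast

lemma vs_PS: "valid_split PS ES xq1 xq2 E0 {}"
proof -
  have "\<forall>(u, v)\<in>E0. acute_r PS xq1 xq2 u v"
    unfolding E0_def
    by (simp, intro conjI; rule acr[OF rnA] acr[OF rnC] acr[OF rnB]; simp add: acute_def dotp_def pts)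
  then show ?thesis unfolding valid_split_def crossE_eq by simp
qed

definition "G0 = delete_top (graph1 PS xq1 xq2 E0)"

lemma G0_LGG: "G0 \<in> G_LGG"
  unfolding G_LGG_def derived_class_def G0_def
  using cp_PS lgg_PS ap_PS vs_PS by blast

lemma ordU_mem: "(a, b) \<in> ordU PS xq1 xq2 \<longleftrightarrow> a \<in> {xu1, xu2, xu3, xtA, xtB, xtC} \<and> b \<in> {xu1, xu2, xu3, xtA, xtB, xtC} \<and> cross (a - xq1) (b - xq1) > 0"
  unfolding ordU_def upper_eq by simp

lemma G0_not_UDG: "H \<in> G_UDG \<Longrightarrow> \<not> obg_iso G0 H"
proof
  assume H: "H \<in> G_UDG" and iso: "obg_iso G0 H"
  have sides: "lside G0 = {xu1, xu2, xu3, xtA, xtB, xtC}" "rside G0 = {xA, xB, xC}"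
    by (simp_all add: G0_def delete_top_def graph1_def upper_eq lower_eq)
  have ords: "lord G0 = ordU PS xq1 xq2" "rord G0 = ordV PS xq1 xq2"
    by (simp_all add: G0_def delete_top_def graph1_def)
  have edg: "edges G0 = {(u, v) \<in> E0. \<exists>u'. (u', v) \<in> E0 \<and> (u, u') \<in> ordU PS xq1 xq2}"
    by (simp add: G0_def delete_top_def graph1_def)
  have oU: "(xu1, xu2) \<in> lord G0" "(xu1, xu3) \<in> lord G0"
    unfolding ords ordU_mem by (simp_all add: pts cross_def)
  have oV: "(xC, xA) \<in> rord G0" "(xB, xC) \<in> rord G0"
    unfolding ords ordV_eq by simp_all
  have tops: "(xu1, xtA) \<in> ordU PS xq1 xq2" "(xu2, xtA) \<in> ordU PS xq1 xq2"
    "(xu2, xtC) \<in> ordU PS xq1 xq2" "(xu3, xtC) \<in> ordU PS xq1 xq2"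
    "(xu1, xtB) \<in> ordU PS xq1 xq2" "(xu3, xtB) \<in> ordU PS xq1 xq2"
    unfolding ordU_mem by (simp_all add: pts cross_def)
  have inE: "(xtA, xA) \<in> E0" "(xtC, xC) \<in> E0" "(xtB, xB) \<in> E0"
    "(xu1, xA) \<in> E0" "(xu2, xA) \<in> E0" "(xu2, xC) \<in> E0" "(xu3, xC) \<in> E0" "(xu1, xB) \<in> E0" "(xu3, xB) \<in> E0"
    unfolding E0_def by simp_all
  have e: "(xu1, xA) \<in> edges G0" "(xu2, xA) \<in> edges G0" "(xu2, xC) \<in> edges G0"
    "(xu3, xC) \<in> edges G0" "(xu1, xB) \<in> edges G0" "(xu3, xB) \<in> edges G0"
    unfolding edg using inE tops by blast+
  show False
    by (rule no_iso_generic[of xu1 G0 xu2 xu3 xA xB xC, OF _ _ _ _ _ _ oU oV e H iso])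
       (simp_all add: sides)
qed

theorem lemma9:
  shows "G_UDG \<subseteq> G_LGG \<and> (\<exists>G \<in> G_LGG. \<forall>H \<in> G_UDG. \<not> obg_iso G H)"
  using part1 G0_LGG G0_not_UDG by blast

end
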